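(* Let $R$ be a commutative ring with identity and $M$ a non-zero comultiplication $R$-module. If $G'(M)$ is non-null and connected, then $G'(M)$ has no cut vertex, i.e. there is no vertex $N$ such that $G'(M)$ with $N$ removed is disconnected.
   Context: An $R$-module $M$ is a comultiplication module if for every submodule $N$ of $M$ there is an ideal $I$ of $R$ with $N=\mathrm{Ann}_M(I)$. A submodule $N$ of $M$ is large if $N\cap L\neq 0$ for every non-zero submodule $L$ of $M$. The large sum graph $G'(M)$ has as vertex set the set of all non-zero non-large submodules of $M$, and two distinct vertices $N,K$ are adjacent iff $N+K$ is non-large in $M$. *)

theory Defs
  imports "HOL-Algebra.Module" "HOL-Algebra.Ideal" "HOL-Algebra.AbelCoset"
begin

definition ann_mod :: "('a, 'c) ring_scheme \<Rightarrow> ('a, 'b, 'd) module_scheme \<Rightarrow> 'a set \<Rightarrow> 'b set" where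
  "ann_mod R M I = {m \<in> carrier M. \<forall>r \<in> I. r \<odot>\<^bsub>M\<^esub> m = \<zero>\<^bsub>M\<^esub>}"

definition comultiplication_module :: "('a, 'c) ring_scheme \<Rightarrow> ('a, 'b, 'd) module_scheme \<Rightarrow> bool" where
  "comultiplication_module R M \<longleftrightarrow>
     (\<forall>N. submodule N R M \<longrightarrow> (\<exists>I. ideal I R \<and> N = ann_mod R M I))"

definition large_submodule :: "('a, 'c) ring_scheme \<Rightarrow> ('a, 'b, 'd) module_scheme \<Rightarrow> 'b set \<Rightarrow> bool" where
  "large_submodule R M N \<longleftrightarrow> submodule N R M \<and>
     (\<forall>L. submodule L R M \<and> L \<noteq> {\<zero>\<^bsub>M\<^esub>} \<longrightarrow> N \<inter> L \<noteq> {\<zero>\<^bsub>M\<^esub>})"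

text \<open>The large sum graph G'(M): vertex set and adjacency relation.\<close>
definition lsg_vertices :: "('a, 'c) ring_scheme \<Rightarrow> ('a, 'b, 'd) module_scheme \<Rightarrow> 'b set set" where
  "lsg_vertices R M = {N. submodule N R M \<and> N \<noteq> {\<zero>\<^bsub>M\<^esub>} \<and> \<not> large_submodule R M N}"

definition lsg_adj :: "('a, 'c) ring_scheme \<Rightarrow> ('a, 'b, 'd) module_scheme \<Rightarrow> 'b set \<Rightarrow> 'b set \<Rightarrow> bool" where
  "lsg_adj R M N K \<longleftrightarrow> N \<in> lsg_vertices R M \<and> K \<in> lsg_vertices R M \<and> N \<noteq> K \<and>
     \<not> large_submodule R M (N <+>\<^bsub>M\<^esub> K)"

definition graph_reachable :: "'v set \<Rightarrow> ('v \<Rightarrow> 'v \<Rightarrow> bool) \<Rightarrow> 'v \<Rightarrow> 'v \<Rightarrow> bool" where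
  "graph_reachable V E x y \<longleftrightarrow> (\<lambda>a b. a \<in> V \<and> b \<in> V \<and> E a b)\<^sup>*\<^sup>* x y"

definition graph_connected :: "'v set \<Rightarrow> ('v \<Rightarrow> 'v \<Rightarrow> bool) \<Rightarrow> bool" where
  "graph_connected V E \<longleftrightarrow> (\<forall>x \<in> V. \<forall>y \<in> V. graph_reachable V E x y)"

definition graph_nonnull :: "'v set \<Rightarrow> ('v \<Rightarrow> 'v \<Rightarrow> bool) \<Rightarrow> bool" where
  "graph_nonnull V E \<longleftrightarrow> (\<exists>x \<in> V. \<exists>y \<in> V. E x y)"

definition graph_cut_vertex :: "'v set \<Rightarrow> ('v \<Rightarrow> 'v \<Rightarrow> bool) \<Rightarrow> 'v \<Rightarrow> bool" where
  "graph_cut_vertex V E v \<longleftrightarrow> v \<in> V \<and> \<not> graph_connected (V - {v}) E"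

end

theory Submission imports Defs begin

context module begin

lemma set_add_mem: "y \<in> X <+>\<^bsub>M\<^esub> Y \<longleftrightarrow> (\<exists>h\<in>X. \<exists>k\<in>Y. y = h \<oplus>\<^bsub>M\<^esub> k)"
  unfolding set_add_def' by blast

lemma sum_submodule:
  assumes X: "submodule X R M" and Y: "submodule Y R M"
  shows "submodule (X <+>\<^bsub>M\<^esub> Y) R M"
proof (rule submoduleI)
  note sX = submoduleE[OF X] and sY = submoduleE[OF Y]
  have zX: "\<zero>\<^bsub>M\<^esub> \<in> X" using X submodule.axioms(1) subgroup.one_closed by fastforce
  have zY: "\<zero>\<^bsub>M\<^esub> \<in> Y" using Y submodule.axioms(1) subgroup.one_closed by fastforce
  show "X <+>\<^bsub>M\<^esub> Y \<subseteq> carrier M" using set_add_closed sX(1) sY(1) by blast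
  show "\<zero>\<^bsub>M\<^esub> \<in> X <+>\<^bsub>M\<^esub> Y" unfolding set_add_mem using zX zY by force
  show "\<ominus>\<^bsub>M\<^esub> a \<in> X <+>\<^bsub>M\<^esub> Y" if aa: "a \<in> X <+>\<^bsub>M\<^esub> Y" for a
  proof -
    obtain h k where hk: "h \<in> X" "k \<in> Y" "a = h \<oplus>\<^bsub>M\<^esub> k" using aa unfolding set_add_mem by blast
    have "\<ominus>\<^bsub>M\<^esub> a = \<ominus>\<^bsub>M\<^esub> h \<oplus>\<^bsub>M\<^esub> \<ominus>\<^bsub>M\<^esub> k"
      using hk sX(1) sY(1) minus_add by blast
    then show ?thesis unfolding set_add_mem using hk sX(3) sY(3) by blast
  qed
  show "a \<oplus>\<^bsub>M\<^esub> b \<in> X <+>\<^bsub>M\<^esub> Y" if ab: "a \<in> X <+>\<^bsub>M\<^esub> Y" "b \<in> X <+>\<^bsub>M\<^esub> Y" for a b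
  proof -
    obtain h k where hk: "h \<in> X" "k \<in> Y" "a = h \<oplus>\<^bsub>M\<^esub> k" using ab(1) unfolding set_add_mem by blast
    obtain h' k' where hk': "h' \<in> X" "k' \<in> Y" "b = h' \<oplus>\<^bsub>M\<^esub> k'" using ab(2) unfolding set_add_mem by blast
    have c: "h \<in> carrier M" "k \<in> carrier M" "h' \<in> carrier M" "k' \<in> carrier M"
      using hk hk' sX(1) sY(1) by auto
    have "a \<oplus>\<^bsub>M\<^esub> b = (h \<oplus>\<^bsub>M\<^esub> h') \<oplus>\<^bsub>M\<^esub> (k \<oplus>\<^bsub>M\<^esub> k')"
      using c hk(3) hk'(3) by (simp add: a_ac)
    then show ?thesis unfolding set_add_mem using hk hk' sX(5) sY(5) by blast
  qed
  show "a \<odot>\<^bsub>M\<^esub> x \<in> X <+>\<^bsub>M\<^esub> Y" if ax: "a \<in> carrier R" "x \<in> X <+>\<^bsub>M\<^esub> Y" for a x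
  proof -
    obtain h k where hk: "h \<in> X" "k \<in> Y" "x = h \<oplus>\<^bsub>M\<^esub> k" using ax(2) unfolding set_add_mem by blast
    have "a \<odot>\<^bsub>M\<^esub> x = a \<odot>\<^bsub>M\<^esub> h \<oplus>\<^bsub>M\<^esub> a \<odot>\<^bsub>M\<^esub> k"
      using hk sX(1) sY(1) ax(1) smult_r_distr by blast
    then show ?thesis unfolding set_add_mem using hk sX(4) sY(4) ax(1) by blast
  qed
qed

lemma sub_zero: "submodule X R M \<Longrightarrow> \<zero>\<^bsub>M\<^esub> \<in> X"
  using submodule.axioms(1) subgroup.one_closed by fastforce

lemma sum_upper:
  assumes X: "submodule X R M" and Y: "submodule Y R M"
  shows "X \<subseteq> X <+>\<^bsub>M\<^esub> Y" "Y \<subseteq> X <+>\<^bsub>M\<^esub> Y"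
proof -
  show "X \<subseteq> X <+>\<^bsub>M\<^esub> Y"
  proof
    fix x assume "x \<in> X"
    then have "x = x \<oplus>\<^bsub>M\<^esub> \<zero>\<^bsub>M\<^esub>" using submoduleE(1)[OF X] by auto
    then show "x \<in> X <+>\<^bsub>M\<^esub> Y" unfolding set_add_mem using sub_zero[OF Y] \<open>x\<in>X\<close> by blast
  qed
  show "Y \<subseteq> X <+>\<^bsub>M\<^esub> Y"
  proof
    fix x assume "x \<in> Y"
    then have "x = \<zero>\<^bsub>M\<^esub> \<oplus>\<^bsub>M\<^esub> x" using submoduleE(1)[OF Y] by auto
    then show "x \<in> X <+>\<^bsub>M\<^esub> Y" unfolding set_add_mem using sub_zero[OF X] \<open>x\<in>Y\<close> by blast
  qed
qed

lemma sum_le: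
  assumes "submodule Z R M" "X \<subseteq> Z" "Y \<subseteq> Z"
  shows "X <+>\<^bsub>M\<^esub> Y \<subseteq> Z"
proof
  fix y assume "y \<in> X <+>\<^bsub>M\<^esub> Y"
  then obtain h k where "h \<in> X" "k \<in> Y" "y = h \<oplus>\<^bsub>M\<^esub> k" unfolding set_add_mem by blast
  then show "y \<in> Z" using submoduleE(5)[OF assms(1)] assms(2,3) by blast
qed

lemma key:
  assumes cm: "comultiplication_module R M"
    and L: "submodule L R M" and A: "submodule A R M" and X: "submodule X R M"
    and LA: "L \<inter> A = {\<zero>\<^bsub>M\<^esub>}" and LX: "L \<inter> X = {\<zero>\<^bsub>M\<^esub>}"
  shows "L \<inter> (A <+>\<^bsub>M\<^esub> X) = {\<zero>\<^bsub>M\<^esub>}"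
proof -
  obtain I where I: "ideal I R" "A = ann_mod R M I" using cm A unfolding comultiplication_module_def by blast
  have IR: "I \<subseteq> carrier R" using I(1) ideal.axioms(1) additive_subgroup.a_subset by blast
  have "y \<in> A" if y: "y \<in> L" "y \<in> A <+>\<^bsub>M\<^esub> X" for y
  proof -
    obtain h k where hk: "h \<in> A" "k \<in> X" "y = h \<oplus>\<^bsub>M\<^esub> k" using y(2) unfolding set_add_mem by blast
    have yc: "y \<in> carrier M" using y(1) submoduleE(1)[OF L] by auto
    have "r \<odot>\<^bsub>M\<^esub> y = \<zero>\<^bsub>M\<^esub>" if r: "r \<in> I" for r
    proof -
      have rR: "r \<in> carrier R" using r IR by auto
      have h0: "r \<odot>\<^bsub>M\<^esub> h = \<zero>\<^bsub>M\<^esub>" using hk(1) r I(2) unfolding ann_mod_def by auto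
      have "r \<odot>\<^bsub>M\<^esub> y = r \<odot>\<^bsub>M\<^esub> h \<oplus>\<^bsub>M\<^esub> r \<odot>\<^bsub>M\<^esub> k"
        using hk submoduleE(1)[OF A] submoduleE(1)[OF X] rR smult_r_distr by blast
      also have "\<dots> = r \<odot>\<^bsub>M\<^esub> k" using h0 rR hk(2) submoduleE(1)[OF X] by auto
      finally have e: "r \<odot>\<^bsub>M\<^esub> y = r \<odot>\<^bsub>M\<^esub> k" .
      have "r \<odot>\<^bsub>M\<^esub> y \<in> L" using submoduleE(4)[OF L] rR y(1) by blast
      moreover have "r \<odot>\<^bsub>M\<^esub> y \<in> X" using e submoduleE(4)[OF X] rR hk(2) by simp
      ultimately show ?thesis using LX by blast
    qed
    then show "y \<in> A" using I(2) yc unfolding ann_mod_def by blast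
  qed
  then have "L \<inter> (A <+>\<^bsub>M\<^esub> X) \<subseteq> L \<inter> A" by blast
  moreover have "\<zero>\<^bsub>M\<^esub> \<in> L \<inter> (A <+>\<^bsub>M\<^esub> X)"
    using sub_zero[OF L] sub_zero[OF sum_submodule[OF A X]] by blast
  ultimately show ?thesis using LA by blast
qed

lemma sub_inter:
  assumes "submodule X R M" "submodule Y R M"
  shows "submodule (X \<inter> Y) R M"
  apply (rule submoduleI)
  using submoduleE[OF assms(1)] submoduleE[OF assms(2)] sub_zero[OF assms(1)] sub_zero[OF assms(2)]
  by auto

lemma nonlarge_witness:
  assumes "submodule N R M" "\<not> large_submodule R M N"
  obtains L where "submodule L R M" "L \<noteq> {\<zero>\<^bsub>M\<^esub>}" "N \<inter> L = {\<zero>\<^bsub>M\<^esub>}"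
  using assms unfolding large_submodule_def by blast

lemma nonlarge_of_witness:
  assumes "submodule L R M" "L \<noteq> {\<zero>\<^bsub>M\<^esub>}" "L \<inter> X = {\<zero>\<^bsub>M\<^esub>}"
  shows "\<not> large_submodule R M X"
  using assms unfolding large_submodule_def by blast

lemma nonlarge_down:
  assumes X: "submodule X R M" and Y: "submodule Y R M" and XY: "X \<subseteq> Y"
    and nl: "\<not> large_submodule R M Y"
  shows "\<not> large_submodule R M X"
proof -
  obtain L where L: "submodule L R M" "L \<noteq> {\<zero>\<^bsub>M\<^esub>}" "Y \<inter> L = {\<zero>\<^bsub>M\<^esub>}"
    using nonlarge_witness[OF Y nl] by blast
  have "L \<inter> X = {\<zero>\<^bsub>M\<^esub>}" using L(3) XY sub_zero[OF X] sub_zero[OF L(1)] by blast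
  then show ?thesis using nonlarge_of_witness L by blast
qed

lemma reach_step:
  assumes "x \<in> V - {v}" "y \<in> V - {v}" "x = y \<or> E x y"
  shows "graph_reachable (V - {v}) E x y"
  using assms unfolding graph_reachable_def by auto

lemma reach_trans:
  "graph_reachable V E x y \<Longrightarrow> graph_reachable V E y z \<Longrightarrow> graph_reachable V E x z"
  unfolding graph_reachable_def by auto

lemma local_bypass:
  assumes cm: "comultiplication_module R M"
    and av: "lsg_adj R M a v" and vb: "lsg_adj R M v b"
  shows "graph_reachable (lsg_vertices R M - {v}) (lsg_adj R M) a b"
proof -
  let ?V = "lsg_vertices R M" and ?E = "lsg_adj R M"
  let ?O = "{\<zero>\<^bsub>M\<^esub>}"
  have aV: "a \<in> ?V" and vV: "v \<in> ?V" and bV: "b \<in> ?V" and anv: "a \<noteq> v" and bnv: "b \<noteq> v"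
    using av vb unfolding lsg_adj_def by auto
  have sa: "submodule a R M" and sv: "submodule v R M" and sb: "submodule b R M"
    and v0: "v \<noteq> ?O" and b0: "b \<noteq> ?O" and a0: "a \<noteq> ?O"
    and anl: "\<not> large_submodule R M a" and bnl: "\<not> large_submodule R M b"
    using aV vV bV unfolding lsg_vertices_def by auto
  have av_nl: "\<not> large_submodule R M (a <+>\<^bsub>M\<^esub> v)" and vb_nl: "\<not> large_submodule R M (v <+>\<^bsub>M\<^esub> b)"
    using av vb unfolding lsg_adj_def by auto
  obtain L where L: "submodule L R M" "L \<noteq> ?O" "(a <+>\<^bsub>M\<^esub> v) \<inter> L = ?O"
    using nonlarge_witness[OF sum_submodule[OF sa sv] av_nl] by blast
  obtain L' where L': "submodule L' R M" "L' \<noteq> ?O" "(v <+>\<^bsub>M\<^esub> b) \<inter> L' = ?O"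
    using nonlarge_witness[OF sum_submodule[OF sv sb] vb_nl] by blast
  have La: "L \<inter> a = ?O" using L(3) sum_upper(1)[OF sa sv] sub_zero[OF sa] sub_zero[OF L(1)] by blast
  have Lv: "L \<inter> v = ?O" using L(3) sum_upper(2)[OF sa sv] sub_zero[OF sv] sub_zero[OF L(1)] by blast
  have L'v: "L' \<inter> v = ?O" using L'(3) sum_upper(1)[OF sv sb] sub_zero[OF sv] sub_zero[OF L'(1)] by blast
  have L'b: "L' \<inter> b = ?O" using L'(3) sum_upper(2)[OF sv sb] sub_zero[OF sb] sub_zero[OF L'(1)] by blast
  have aV': "a \<in> ?V - {v}" and bV': "b \<in> ?V - {v}" using aV bV anv bnv by auto
  have direct: "graph_reachable (?V - {v}) ?E a b"
    if W: "submodule W R M" "W \<noteq> ?O" "W \<inter> a = ?O" "W \<inter> b = ?O" for W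
  proof -
    have "W \<inter> (a <+>\<^bsub>M\<^esub> b) = ?O" using key[OF cm W(1) sa sb W(3) W(4)] .
    then have "\<not> large_submodule R M (a <+>\<^bsub>M\<^esub> b)" using nonlarge_of_witness W(1,2) by blast
    then have "a = b \<or> ?E a b" using aV bV unfolding lsg_adj_def by auto
    then show ?thesis by (rule reach_step[OF aV' bV'])
  qed
  show ?thesis
  proof (cases "b \<inter> L = ?O")
    case True
    then show ?thesis using direct[OF L(1,2) La] by blast
  next
    case F1: False
    show ?thesis
    proof (cases "a \<inter> L' = ?O")
      case True
      then show ?thesis using direct[OF L'(1,2)] L'b by blast
    next
      case F2: False
      define c where "c = b \<inter> L"
      define d where "d = a \<inter> L'"
      have sc: "submodule c R M" unfolding c_def using sub_inter sb L(1) by blast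
      have sd: "submodule d R M" unfolding d_def using sub_inter sa L'(1) by blast
      have c0: "c \<noteq> ?O" using F1 c_def by simp
      have d0: "d \<noteq> ?O" using F2 d_def by simp
      have vc: "v \<inter> c = ?O" using Lv sub_zero[OF sc] unfolding c_def by blast
      have vd: "v \<inter> d = ?O" using L'v sub_zero[OF sd] unfolding d_def by blast
      have cnv: "c \<noteq> v" using vc c0 by auto
      have dnv: "d \<noteq> v" using vd d0 by auto
      have cnl: "\<not> large_submodule R M c" using nonlarge_down[OF sc sb _ bnl] unfolding c_def by blast
      have dnl: "\<not> large_submodule R M d" using nonlarge_down[OF sd sa _ anl] unfolding d_def by blast
      have cV': "c \<in> ?V - {v}" using sc c0 cnl cnv unfolding lsg_vertices_def by auto
      have dV': "d \<in> ?V - {v}" using sd d0 dnl dnv unfolding lsg_vertices_def by auto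
      have "a <+>\<^bsub>M\<^esub> d \<subseteq> a" using sum_le[OF sa] unfolding d_def by blast
      then have "\<not> large_submodule R M (a <+>\<^bsub>M\<^esub> d)"
        using nonlarge_down[OF sum_submodule[OF sa sd] sa _ anl] by blast
      then have "a = d \<or> ?E a d" using aV' dV' unfolding lsg_adj_def by auto
      then have r1: "graph_reachable (?V - {v}) ?E a d"
        by (rule reach_step[OF aV' dV'])
      have "v \<inter> (d <+>\<^bsub>M\<^esub> c) = ?O" using key[OF cm sv sd sc vd vc] .
      then have "\<not> large_submodule R M (d <+>\<^bsub>M\<^esub> c)" using nonlarge_of_witness sv v0 by blast
      then have "d = c \<or> ?E d c" using dV' cV' unfolding lsg_adj_def by auto
      then have r2: "graph_reachable (?V - {v}) ?E d c"
        by (rule reach_step[OF dV' cV'])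
      have "c <+>\<^bsub>M\<^esub> b \<subseteq> b" using sum_le[OF sb] unfolding c_def by blast
      then have "\<not> large_submodule R M (c <+>\<^bsub>M\<^esub> b)"
        using nonlarge_down[OF sum_submodule[OF sc sb] sb _ bnl] by blast
      then have "c = b \<or> ?E c b" using cV' bV' unfolding lsg_adj_def by auto
      then have r3: "graph_reachable (?V - {v}) ?E c b"
        by (rule reach_step[OF cV' bV'])
      show ?thesis using reach_trans[OF reach_trans[OF r1 r2] r3] .
    qed
  qed
qed

end

theorem theorem2p9:
  fixes R :: "('a, 'c) ring_scheme" and M :: "('a, 'b, 'd) module_scheme"
  assumes "module R M"
    and "carrier M \<noteq> {\<zero>\<^bsub>M\<^esub>}"
    and "comultiplication_module R M"
    and "graph_nonnull (lsg_vertices R M) (lsg_adj R M)"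
    and "graph_connected (lsg_vertices R M) (lsg_adj R M)"
  shows "\<not> (\<exists>N. graph_cut_vertex (lsg_vertices R M) (lsg_adj R M) N)"
proof
  interpret module R M by fact
  let ?V = "lsg_vertices R M" and ?E = "lsg_adj R M"
  assume "\<exists>N. graph_cut_vertex ?V ?E N"
  then obtain v where vV: "v \<in> ?V" and nc: "\<not> graph_connected (?V - {v}) ?E"
    unfolding graph_cut_vertex_def by blast
  then obtain x y where xV: "x \<in> ?V - {v}" and yV: "y \<in> ?V - {v}"
    and nr: "\<not> graph_reachable (?V - {v}) ?E x y"
    unfolding graph_connected_def by blast
  have "graph_reachable ?V ?E x y" using assms(5) xV yV unfolding graph_connected_def by blast
  then have rt: "(\<lambda>a b. a \<in> ?V \<and> b \<in> ?V \<and> ?E a b)\<^sup>*\<^sup>* x y" unfolding graph_reachable_def .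
  have inv: "(z \<noteq> v \<longrightarrow> graph_reachable (?V - {v}) ?E x z) \<and>
     (z = v \<longrightarrow> (\<exists>w. graph_reachable (?V - {v}) ?E x w \<and> ?E w v))"
    if "(\<lambda>a b. a \<in> ?V \<and> b \<in> ?V \<and> ?E a b)\<^sup>*\<^sup>* x z" for z
    using that
  proof (induction rule: rtranclp_induct)
    case base
    then show ?case using xV unfolding graph_reachable_def by auto
  next
    case (step z z')
    have zz': "z \<in> ?V" "z' \<in> ?V" "?E z z'" using step(2) by auto
    show ?case
    proof (cases "z = v")
      case True
      then obtain w where w: "graph_reachable (?V - {v}) ?E x w" "?E w v" using step(3) by blast
      have "z' \<noteq> v" using zz'(3) True unfolding lsg_adj_def by auto
      moreover have "graph_reachable (?V - {v}) ?E w z'"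
        using local_bypass[OF assms(3) w(2)] zz'(3) True by simp
      ultimately show ?thesis using reach_trans[OF w(1)] by blast
    next
      case False
      then have rz: "graph_reachable (?V - {v}) ?E x z" using step(3) by blast
      show ?thesis
      proof (cases "z' = v")
        case True
        then show ?thesis using rz zz'(3) by blast
      next
        case F: False
        have "graph_reachable (?V - {v}) ?E z z'"
          using zz' F False by (intro reach_step) auto
        then show ?thesis using reach_trans[OF rz] F by blast
      qed
    qed
  qed
  have "graph_reachable (?V - {v}) ?E x y" using inv[OF rt] yV by blast
  then show False using nr by blast
qed

end
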